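(* Let $A\in\mathbb{R}^{n\times n}$, $B\in\mathbb{R}^{n\times k}$ and $F\in\mathbb{R}^{k\times n}$ be fixed. For $C\in\mathbb{R}^{m\times n}$ let $\Omega(C,F)=[C;\,C(A+BF);\,\dots;\,C(A+BF)^{n-1}]$ and let $\mathcal{V}^*(C)$ be the maximal $(A,B)$-invariant subspace contained in $\operatorname{Ker}C$. Define $BR1_a=\arg\min_{C\in\mathbb{R}^{m\times n}}\dim\operatorname{Ker}\Omega(C,F)$, $BR2_a=\arg\min_{C\in BR1_a}\dim\mathcal{V}^*(C)$ and $BR2X_a=\arg\min_{C\in\mathbb{R}^{m\times n}}\dim\mathcal{V}^*(C)$. If $\dim\operatorname{Ker}\Omega(C,F)=\dim\mathcal{V}^*(C)$ for every $C\in BR1_a$, then $BR1_a=BR2_a\subseteq BR2X_a$.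
   Context: A subspace $\mathcal{V}\subseteq\mathbb{R}^n$ is $(A,B)$-invariant if there exists a matrix $F'$ with $(A+BF')\mathcal{V}\subseteq\mathcal{V}$. Among all $(A,B)$-invariant subspaces contained in $\operatorname{Ker}C$ there is a maximal one, $\mathcal{V}^*(C)$. *)

theory Defs
  imports "HOL-Analysis.Analysis"
begin

primrec mat_pow :: "real^'n^'n \<Rightarrow> nat \<Rightarrow> real^'n^'n" where
  "mat_pow M 0 = mat 1"
| "mat_pow M (Suc i) = M ** mat_pow M i"

definition mat_ker :: "real^'n^'m \<Rightarrow> (real^'n) set" where
  "mat_ker M = {x. M *v x = 0}"

text \<open>Kernel of the observability-type matrix
  Omega(C,F) = [C; C(A+BF); ...; C(A+BF)^(n-1)], n = CARD('n):
  x is in the kernel iff every block row annihilates x.\<close>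
definition omega_ker :: "real^'n^'n \<Rightarrow> real^'k^'n \<Rightarrow> real^'n^'k \<Rightarrow> real^'n^'m \<Rightarrow> (real^'n) set" where
  "omega_ker A B F C = {x. \<forall>i<CARD('n). (C ** mat_pow (A + B ** F) i) *v x = 0}"

definition ab_invariant :: "real^'n^'n \<Rightarrow> real^'k^'n \<Rightarrow> (real^'n) set \<Rightarrow> bool" where
  "ab_invariant A B V \<longleftrightarrow> subspace V \<and> (\<exists>F'::real^'n^'k. \<forall>x\<in>V. (A + B ** F') *v x \<in> V)"

definition vstar :: "real^'n^'n \<Rightarrow> real^'k^'n \<Rightarrow> real^'n^'m \<Rightarrow> (real^'n) set" where
  "vstar A B C = (THE V. ab_invariant A B V \<and> V \<subseteq> mat_ker C \<and>
      (\<forall>W. ab_invariant A B W \<and> W \<subseteq> mat_ker C \<longrightarrow> W \<subseteq> V))"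

definition argmin_set :: "('a \<Rightarrow> nat) \<Rightarrow> 'a set \<Rightarrow> 'a set" where
  "argmin_set f S = {x\<in>S. \<forall>y\<in>S. f x \<le> f y}"

end

theory Submission
  imports Defs
begin

lemma ab_inv_char:
  fixes A :: "real^'n^'n" and B :: "real^'k^'n"
  assumes "subspace V"
  shows "ab_invariant A B V \<longleftrightarrow> (\<forall>x\<in>V. \<exists>u. A *v x + B *v u \<in> V)"
proof
  assume "ab_invariant A B V"
  then obtain F' :: "real^'n^'k" where F': "\<forall>x\<in>V. (A + B ** F') *v x \<in> V"
    unfolding ab_invariant_def by blast
  show "\<forall>x\<in>V. \<exists>u. A *v x + B *v u \<in> V"
  proof
    fix x assume "x \<in> V"
    then have "A *v x + B *v (F' *v x) \<in> V" using F'
      by (simp add: matrix_vector_mult_add_rdistrib matrix_vector_mul_assoc)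
    then show "\<exists>u. A *v x + B *v u \<in> V" by blast
  qed
next
  assume h: "\<forall>x\<in>V. \<exists>u. A *v x + B *v u \<in> V"
  obtain b where b: "b \<subseteq> V" "independent b" "V \<subseteq> span b"
    by (rule basis_exists[of V]) auto
  have "\<forall>x\<in>b. \<exists>u. A *v x + B *v u \<in> V" using h b(1) by blast
  then obtain g where g: "\<forall>x\<in>b. A *v x + B *v g x \<in> V"
    by (rule bchoice[elim_format]) blast
  obtain G where G: "linear G" "\<forall>x\<in>b. G x = g x"
    using linear_independent_extend[OF b(2), of g] by blast
  define F' :: "real^'n^'k" where "F' = matrix G"
  have FG: "F' *v x = G x" for x
    unfolding F'_def using G(1) by (metis matrix_vector_mul)
  have "\<forall>x\<in>V. (A + B ** F') *v x \<in> V"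
  proof
    fix x assume "x \<in> V"
    then have "x \<in> span b" using b by blast
    then show "(A + B ** F') *v x \<in> V"
    proof (rule span_induct)
      show "subspace {x. (A + B ** F') *v x \<in> V}"
      proof -
        have "linear (\<lambda>x. (A + B ** F') *v x)" by (rule matrix_vector_mul_linear)
        then show ?thesis using assms unfolding subspace_def
          by (simp add: linear_0 linear_add linear_scale)
      qed
    next
      fix y assume "y \<in> b"
      then show "(A + B ** F') *v y \<in> V" using g G(2)
        by (simp add: matrix_vector_mult_add_rdistrib matrix_vector_mul_assoc[symmetric] FG)
    qed
  qed
  then show "ab_invariant A B V" unfolding ab_invariant_def using assms by blast
qed


lemma subspace_mat_ker: "subspace (mat_ker (C::real^'n^'m))"
proof -
  have "linear ((*v) C)" by (rule matrix_vector_mul_linear)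
  then show ?thesis unfolding subspace_def mat_ker_def
    by (simp add: linear_0 linear_add linear_scale)
qed

lemma vstar_props:
  fixes A :: "real^'n^'n" and B :: "real^'k^'n" and C :: "real^'n^'m"
  shows "ab_invariant A B (vstar A B C) \<and> vstar A B C \<subseteq> mat_ker C \<and>
      (\<forall>W. ab_invariant A B W \<and> W \<subseteq> mat_ker C \<longrightarrow> W \<subseteq> vstar A B C)"
proof -
  define P where "P V \<longleftrightarrow> ab_invariant A B V \<and> V \<subseteq> mat_ker C" for V
  define D where "D = dim ` {V. P V}"
  have finD: "finite D"
    by (rule finite_subset[of _ "{..CARD('n)}"]) (auto simp: D_def dim_subset_UNIV_cart)
  have P0: "P {0}" unfolding P_def ab_invariant_def mat_ker_def
    by (auto simp: subspace_single_0 matrix_vector_mult_0_right)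
  have "Max D \<in> D" using finD P0 unfolding D_def by (intro Max_in) auto
  then obtain V where PV: "P V" and dV: "dim V = Max D" unfolding D_def by auto
  have maxV: "W \<subseteq> V" if PW: "P W" for W
  proof (rule ccontr)
    assume nW: "\<not> W \<subseteq> V"
    define S where "S = {x + y |x y. x \<in> V \<and> y \<in> W}"
    have sV: "subspace V" and sW: "subspace W"
      using PV PW unfolding P_def ab_invariant_def by auto
    have sS: "subspace S" unfolding S_def by (rule subspace_sums[OF sV sW])
    have iV: "\<forall>x\<in>V. \<exists>u. A *v x + B *v u \<in> V"
      using PV sV ab_inv_char unfolding P_def by blast
    have iW: "\<forall>x\<in>W. \<exists>u. A *v x + B *v u \<in> W"
      using PW sW ab_inv_char unfolding P_def by blast
    have "\<forall>z\<in>S. \<exists>u. A *v z + B *v u \<in> S"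
    proof
      fix z assume "z \<in> S"
      then obtain x y where xy: "z = x + y" "x \<in> V" "y \<in> W" unfolding S_def by blast
      obtain u1 where u1: "A *v x + B *v u1 \<in> V" using iV xy by blast
      obtain u2 where u2: "A *v y + B *v u2 \<in> W" using iW xy by blast
      have "A *v z + B *v (u1 + u2) = (A *v x + B *v u1) + (A *v y + B *v u2)"
        using xy by (simp add: matrix_vector_right_distrib algebra_simps)
      then have "A *v z + B *v (u1 + u2) \<in> S" using u1 u2 unfolding S_def by blast
      then show "\<exists>u. A *v z + B *v u \<in> S" by blast
    qed
    then have aS: "ab_invariant A B S" using ab_inv_char sS by blast
    have "S \<subseteq> mat_ker C"
    proof
      fix z assume "z \<in> S"
      then obtain x y where xy: "z = x + y" "x \<in> V" "y \<in> W" unfolding S_def by blast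
      then show "z \<in> mat_ker C" using PV PW subspace_mat_ker[of C] unfolding P_def
        by (metis subsetD subspace_add)
    qed
    then have "P S" using aS P_def by blast
    then have "dim S \<in> D" unfolding D_def by blast
    then have le: "dim S \<le> dim V" using dV finD by simp
    have "V \<subseteq> S" unfolding S_def using sW subspace_0 by force
    moreover have "W \<subseteq> S" unfolding S_def using sV subspace_0 by force
    ultimately have "V \<subset> S" using nW by blast
    moreover have "span V = V" using sV span_eq_iff by blast
    moreover have "span S = S" using sS span_eq_iff by blast
    ultimately have "span V \<subset> span S" by metis
    then have "dim V < dim S" by (rule dim_psubset)
    then show False using le by simp
  qed
  have "vstar A B C = V" unfolding vstar_def
  proof (rule the_equality)
    show "ab_invariant A B V \<and> V \<subseteq> mat_ker C \<and>
      (\<forall>W. ab_invariant A B W \<and> W \<subseteq> mat_ker C \<longrightarrow> W \<subseteq> V)"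
      using PV maxV unfolding P_def by blast
  next
    fix V' assume "ab_invariant A B V' \<and> V' \<subseteq> mat_ker C \<and>
      (\<forall>W. ab_invariant A B W \<and> W \<subseteq> mat_ker C \<longrightarrow> W \<subseteq> V')"
    then show "V' = V" using PV maxV unfolding P_def by blast
  qed
  then show ?thesis using PV maxV unfolding P_def by blast
qed


lemma mat_pow_comm: "mat_pow M i ** M = M ** mat_pow M i"
proof (induction i)
  case 0 then show ?case by simp
next
  case (Suc i)
  have "mat_pow M (Suc i) ** M = M ** (mat_pow M i ** M)" by (simp add: matrix_mul_assoc)
  also have "\<dots> = M ** mat_pow M (Suc i)" using Suc by simp
  finally show ?case .
qed

definition KK :: "real^'n^'n \<Rightarrow> real^'n^'m \<Rightarrow> nat \<Rightarrow> (real^'n) set" where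
  "KK M C j = {x. \<forall>i<j. (C ** mat_pow M i) *v x = 0}"

lemma KK_Suc: "KK M C (Suc j) = {x. C *v x = 0 \<and> M *v x \<in> KK M C j}"
proof -
  have e: "(C ** mat_pow M (Suc i)) *v x = (C ** mat_pow M i) *v (M *v x)" for i x
    by (simp add: mat_pow_comm[symmetric] matrix_mul_assoc matrix_vector_mul_assoc)
  have q: "(\<forall>i<Suc j. P i) \<longleftrightarrow> P 0 \<and> (\<forall>i<j. P (Suc i))" for P :: "nat \<Rightarrow> bool"
    by (auto simp: less_Suc_eq_0_disj)
  have c0: "C ** mat_pow M 0 = C" by simp
  show ?thesis unfolding KK_def
    by (simp only: q e c0 mem_Collect_eq)
qed

lemma KK_anti: "KK M C (Suc j) \<subseteq> KK M C j"
  unfolding KK_def by auto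

lemma KK_subspace: "subspace (KK M C j)"
proof -
  have l: "linear ((*v) (C ** mat_pow M i))" for i by (rule matrix_vector_mul_linear)
  show ?thesis unfolding subspace_def KK_def
    by (simp add: linear_0[OF l] linear_add[OF l] linear_scale[OF l])
qed

lemma KK_stable: "KK M C (Suc j) = KK M C j \<Longrightarrow> KK M C (j + d) = KK M C j"
proof (induction d)
  case 0 then show ?case by simp
next
  case (Suc d)
  have "KK M C (j + Suc d) = KK M C (Suc (j + d))" by simp
  also have "\<dots> = KK M C (Suc j)" using Suc by (simp only: KK_Suc)
  also have "\<dots> = KK M C j" using Suc by simp
  finally show ?case .
qed

lemma KK_final:
  fixes M :: "real^'n^'n" and C :: "real^'n^'m"
  shows "KK M C (Suc CARD('n)) = KK M C CARD('n)"
proof -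
  let ?n = "CARD('n)"
  have claim: "(\<exists>i<j. KK M C (Suc i) = KK M C i) \<or> dim (KK M C j) + j \<le> ?n" for j
  proof (induction j)
    case 0 then show ?case using dim_subset_UNIV_cart[of "KK M C 0"] by simp
  next
    case (Suc j)
    show ?case
    proof (cases "(\<exists>i<j. KK M C (Suc i) = KK M C i) \<or> KK M C (Suc j) = KK M C j")
      case True then show ?thesis using less_Suc_eq by blast
    next
      case False
      then have d: "dim (KK M C j) + j \<le> ?n" using Suc by blast
      have "KK M C (Suc j) \<subset> KK M C j" using False KK_anti by blast
      moreover have "span (KK M C (Suc j)) = KK M C (Suc j)"
        using KK_subspace span_eq_iff by blast
      moreover have "span (KK M C j) = KK M C j"
        using KK_subspace span_eq_iff by blast
      ultimately have "span (KK M C (Suc j)) \<subset> span (KK M C j)" by metis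
      then have "dim (KK M C (Suc j)) < dim (KK M C j)" by (rule dim_psubset)
      then show ?thesis using d by simp
    qed
  qed
  from claim[of ?n] show ?thesis
  proof
    assume "\<exists>i<?n. KK M C (Suc i) = KK M C i"
    then obtain i where i: "i < ?n" "KK M C (Suc i) = KK M C i" by blast
    have "KK M C (i + (?n - i)) = KK M C i" by (rule KK_stable[OF i(2)])
    moreover have "KK M C (i + (Suc ?n - i)) = KK M C i" by (rule KK_stable[OF i(2)])
    ultimately show ?thesis using i(1) by (simp add: Suc_diff_le)
  next
    assume "dim (KK M C ?n) + ?n \<le> ?n"
    then have "KK M C ?n \<subseteq> {0}" using dim_eq_0 by simp
    moreover have "0 \<in> KK M C (Suc ?n)" using KK_subspace subspace_0 by blast
    ultimately show ?thesis using KK_anti[of M C ?n] by blast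
  qed
qed

lemma omega_sub_vstar:
  fixes A :: "real^'n^'n" and B :: "real^'k^'n" and F :: "real^'n^'k" and C :: "real^'n^'m"
  shows "omega_ker A B F C \<subseteq> vstar A B C"
proof -
  let ?M = "A + B ** F"
  have eq: "omega_ker A B F C = KK ?M C CARD('n)"
    unfolding omega_ker_def KK_def by simp
  have "ab_invariant A B (KK ?M C CARD('n))"
    unfolding ab_invariant_def
  proof (intro conjI exI)
    show "subspace (KK ?M C CARD('n))" by (rule KK_subspace)
    show "\<forall>x\<in>KK ?M C CARD('n). ?M *v x \<in> KK ?M C CARD('n)"
      using KK_final[of ?M C] KK_Suc[of ?M C "CARD('n)"] by blast
  qed
  moreover have "KK ?M C CARD('n) \<subseteq> mat_ker C"
    using KK_final[of ?M C] KK_Suc[of ?M C "CARD('n)"] unfolding mat_ker_def by blast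
  ultimately show ?thesis using vstar_props[of A B C] eq by blast
qed

theorem lemma5:
  fixes A :: "real^'n^'n" and B :: "real^'k^'n" and F :: "real^'n^'k"
  assumes "\<forall>C\<in>argmin_set (\<lambda>C::real^'n^'m. dim (omega_ker A B F C)) UNIV.
             dim (omega_ker A B F C) = dim (vstar A B C)"
  shows "argmin_set (\<lambda>C::real^'n^'m. dim (omega_ker A B F C)) UNIV
           = argmin_set (\<lambda>C. dim (vstar A B C))
               (argmin_set (\<lambda>C::real^'n^'m. dim (omega_ker A B F C)) UNIV)
       \<and> argmin_set (\<lambda>C. dim (vstar A B C))
               (argmin_set (\<lambda>C::real^'n^'m. dim (omega_ker A B F C)) UNIV)
           \<subseteq> argmin_set (\<lambda>C::real^'n^'m. dim (vstar A B C)) UNIV"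
proof -
  let ?S = "argmin_set (\<lambda>C::real^'n^'m. dim (omega_ker A B F C)) UNIV"
  have le: "dim (omega_ker A B F C) \<le> dim (vstar A B C)" for C :: "real^'n^'m"
    by (rule dim_subset[OF omega_sub_vstar])
  have key: "dim (vstar A B C) \<le> dim (vstar A B C')" if "C \<in> ?S" for C C' :: "real^'n^'m"
  proof -
    have "dim (vstar A B C) = dim (omega_ker A B F C)" using assms that by simp
    also have "\<dots> \<le> dim (omega_ker A B F C')" using that unfolding argmin_set_def by simp
    also have "\<dots> \<le> dim (vstar A B C')" by (rule le)
    finally show ?thesis .
  qed
  have 1: "?S = argmin_set (\<lambda>C. dim (vstar A B C)) ?S"
    using key unfolding argmin_set_def[of _ ?S] by blast
  have 2: "?S \<subseteq> argmin_set (\<lambda>C::real^'n^'m. dim (vstar A B C)) UNIV"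
    using key unfolding argmin_set_def[of "\<lambda>C. dim (vstar A B C)"] by blast
  show ?thesis using 1 2 by simp
qed

end
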